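(* Let $f \in \mathrm{Inj}(\Omega)$ have at least one infinite cycle, and let $n \in \mathbb{Z}_+$ with $(f)\mathrm{C}_n > 0$. Then there is a transposition $h \in \mathrm{Fin}(\Omega)$ such that $(fh)\mathrm{C}_n = (f)\mathrm{C}_n - 1$ and $(fh)\mathrm{C}_m = (f)\mathrm{C}_m$ for all $m \in \mathbb{Z}_+ \setminus \{n\}$ (where, if $(f)\mathrm{C}_n=\aleph_0$, $(f)\mathrm{C}_n-1$ means $\aleph_0$).
   Context: $\Omega$ is a countably infinite set; maps are written on the right and composed left to right. $\mathrm{Inj}(\Omega)$ is the monoid of injective maps $\Omega\to\Omega$; $\mathrm{Fin}(\Omega)$ the group of permutations moving only finitely many points. For $f\in\mathrm{Inj}(\Omega)$, a cycle of $f$ is a nonempty $\Sigma\subseteq\Omega$ such that (a) for all $\alpha\in\Omega$, $(\alpha)f\in\Sigma$ iff $\alpha\in\Sigma$, and (b) no proper nonempty subset of $\Sigma$ satisfies (a). For $n\in\mathbb{Z}_+$, $(f)\mathrm{C}_n$ is the cardinal number of cycles of $f$ of cardinality $n$. *)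

theory Defs
  imports Main "HOL-Library.Extended_Nat" "HOL-Library.Countable_Set" "HOL-Combinatorics.Transposition"
begin

definition closed_set :: "('a \<Rightarrow> 'a) \<Rightarrow> 'a set \<Rightarrow> bool" where
  "closed_set f S \<longleftrightarrow> (\<forall>x. f x \<in> S \<longleftrightarrow> x \<in> S)"

definition is_cycle :: "('a \<Rightarrow> 'a) \<Rightarrow> 'a set \<Rightarrow> bool" where
  "is_cycle f S \<longleftrightarrow> S \<noteq> {} \<and> closed_set f S \<and>
     (\<forall>T. T \<subseteq> S \<and> T \<noteq> S \<and> T \<noteq> {} \<longrightarrow> \<not> closed_set f T)"

(* (f)C_n: the cardinal number of cycles of f of cardinality n, as an extended
   natural (the base set is countable, so the cardinal is in {0,1,...,aleph_0}). *)
definition cyc_count :: "('a \<Rightarrow> 'a) \<Rightarrow> nat \<Rightarrow> enat" where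
  "cyc_count f n = (let C = {S. is_cycle f S \<and> finite S \<and> card S = n} in
                     if finite C then enat (card C) else \<infinity>)"

end

theory Submission imports Defs begin
lemma closed_Int: "closed_set f A \<Longrightarrow> closed_set f B \<Longrightarrow> closed_set f (A \<inter> B)"
  unfolding closed_set_def by blast

lemma closed_Diff: "closed_set f A \<Longrightarrow> closed_set f B \<Longrightarrow> closed_set f (A - B)"
  unfolding closed_set_def by blast

lemma cycle_closed: "is_cycle f S \<Longrightarrow> closed_set f S"
  unfolding is_cycle_def by blast

lemma cycle_ne: "is_cycle f S \<Longrightarrow> S \<noteq> {}"
  unfolding is_cycle_def by blast

lemma closedD: "closed_set f S \<Longrightarrow> f x \<in> S \<longleftrightarrow> x \<in> S"
  unfolding closed_set_def by blast

lemma cycle_sub_eq: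
  assumes "is_cycle f S" "closed_set f T" "T \<subseteq> S" "T \<noteq> {}"
  shows "T = S"
  using assms unfolding is_cycle_def by blast

lemma cycle_sub_or_disj:
  assumes "is_cycle f S" "closed_set f U"
  shows "S \<subseteq> U \<or> S \<inter> U = {}"
proof -
  have c: "closed_set f S" using assms(1) by (rule cycle_closed)
  have "closed_set f (S \<inter> U)" using assms(2) c closed_Int by blast
  hence "S \<inter> U = {} \<or> S \<inter> U = S" using cycle_sub_eq[OF assms(1)] by blast
  thus ?thesis by blast
qed

lemma finite_contra:
  assumes "inj f" "finite S" "a \<in> S" "xa \<notin> S" "f xa = a"
    and h: "\<And>x. x \<in> S \<Longrightarrow> x \<noteq> xa \<Longrightarrow> f x \<in> S"
  shows False
proof -
  have sub: "f ` S \<subseteq> S"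
  proof
    fix y assume "y \<in> f ` S"
    then obtain x where x: "x \<in> S" "y = f x" by blast
    have "x \<noteq> xa" using x(1) assms(4) by metis
    thus "y \<in> S" using h x by simp
  qed
  have "inj_on f S" using assms(1) inj_on_subset by (metis subset_UNIV)
  hence "card (f ` S) = card S" by (rule card_image)
  hence "f ` S = S" using card_subset_eq[OF assms(2) sub] by simp
  hence "a \<in> f ` S" using assms(3) by simp
  then obtain x where x: "x \<in> S" "a = f x" by (rule imageE)
  have "f x = f xa" using x assms(5) by simp
  hence "x = xa" using injD[OF assms(1)] by blast
  thus False using x assms(4) by simp
qed
lemma main_aux:
  assumes inj: "inj f"
    and C: "is_cycle f C" "finite C"
    and D: "is_cycle f D" "infinite D"
    and a: "a \<in> C" and b: "b \<in> D"
    and g: "g = transpose a b \<circ> f"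
  shows "{S. is_cycle g S \<and> finite S \<and> card S = m} =
         {S. is_cycle f S \<and> finite S \<and> card S = m} - {C}"
proof -
  let ?U = "C \<union> D"
  have Cc: "closed_set f C" and Dc: "closed_set f D" using C(1) D(1) cycle_closed by blast+
  have CD: "C \<inter> D = {}"
  proof (rule ccontr)
    assume "C \<inter> D \<noteq> {}"
    hence "C \<inter> D = C" using cycle_sub_eq[OF C(1) closed_Int[OF Cc Dc]] by auto
    hence "C \<subseteq> D" by blast
    hence "C = D" using cycle_sub_eq[OF D(1) Cc] cycle_ne[OF C(1)] by blast
    thus False using C D by simp
  qed
  have ab: "a \<noteq> b" using a b CD by auto
  have Uc: "closed_set f ?U" unfolding closed_set_def using closedD[OF Cc] closedD[OF Dc] by blast
  have gx: "g x = (if f x = a then b else if f x = b then a else f x)" for x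
    using g by (auto simp: transpose_def)
  have fU: "f x \<in> ?U \<longleftrightarrow> x \<in> ?U" for x using closedD[OF Uc] by blast
  have Ugc: "closed_set g ?U" unfolding closed_set_def
  proof
    fix x show "g x \<in> ?U \<longleftrightarrow> x \<in> ?U" using fU[of x] a b gx[of x] by auto
  qed
  obtain xa where xa: "xa \<in> C" "f xa = a"
  proof -
    have s1: "f ` C \<subseteq> C"
    proof
      fix y assume "y \<in> f ` C"
      then obtain x where "x \<in> C" "y = f x" by (rule imageE)
      thus "y \<in> C" using closedD[OF Cc, of x] by simp
    qed
    have s2: "inj_on f C" using inj inj_on_subset by (metis subset_UNIV)
    have "f ` C = C" by (rule endo_inj_surj[OF C(2) s1 s2])
    hence "a \<in> f ` C" using a by simp
    then obtain x where "x \<in> C" "a = f x" by (rule imageE)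
    thus ?thesis using that by simp
  qed
  have fC: "x \<in> C \<longleftrightarrow> f x \<in> C" for x using closedD[OF Cc] by blast
  have fD: "x \<in> D \<longleftrightarrow> f x \<in> D" for x using closedD[OF Dc] by blast
  have gC: "x \<in> C \<Longrightarrow> x \<noteq> xa \<Longrightarrow> g x = f x" for x
  proof -
    assume "x \<in> C" "x \<noteq> xa"
    hence "f x \<noteq> a" using xa inj by (auto dest: injD)
    moreover have "f x \<noteq> b" using \<open>x \<in> C\<close> fC[of x] b CD by blast
    ultimately show ?thesis using gx by simp
  qed
  have key: "T = ?U" if T: "closed_set g T" "T \<subseteq> ?U" "T \<noteq> {}" for T
  proof -
    have Tg: "x \<in> T \<longleftrightarrow> g x \<in> T" for x using closedD[OF T(1)] by blast
    show ?thesis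
    proof (cases "a \<in> T")
      case aT: True
      show ?thesis
      proof (cases "b \<in> T")
        case True
        have "closed_set f T" unfolding closed_set_def
        proof
          fix x show "f x \<in> T \<longleftrightarrow> x \<in> T"
            using Tg[of x] gx[of x] aT True by (auto split: if_splits)
        qed
        hence "T \<inter> C = C" "T \<inter> D = D"
          using cycle_sub_eq[OF C(1) closed_Int[OF _ Cc], of T]
                cycle_sub_eq[OF D(1) closed_Int[OF _ Dc], of T] aT True a b by auto
        thus ?thesis using T by auto
      next
        case False
        have "xa \<notin> T" using Tg[of xa] gx[of xa] xa False by simp
        have False
        proof (rule finite_contra[OF inj _ _ _ xa(2), of "T \<inter> C"])
          show "finite (T \<inter> C)" using C by simp
          show "a \<in> T \<inter> C" using aT a by simp
          show "xa \<notin> T \<inter> C" using \<open>xa \<notin> T\<close> by simp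
          fix x assume "x \<in> T \<inter> C" "x \<noteq> xa"
          thus "f x \<in> T \<inter> C" using Tg[of x] gC[of x] fC[of x] by auto
        qed
        thus ?thesis ..
      qed
    next
      case naT: False
      show ?thesis
      proof (cases "b \<in> T")
        case True
        have "xa \<in> T" using Tg[of xa] gx[of xa] xa True by simp
        have False
        proof (rule finite_contra[OF inj _ _ _ xa(2), of "C - T"])
          show "finite (C - T)" using C by simp
          show "a \<in> C - T" using naT a by simp
          show "xa \<notin> C - T" using \<open>xa \<in> T\<close> by simp
          fix x assume "x \<in> C - T" "x \<noteq> xa"
          thus "f x \<in> C - T" using Tg[of x] gC[of x] fC[of x] by auto
        qed
        thus ?thesis ..
      next
        case False
        have "closed_set f T" unfolding closed_set_def
        proof
          fix x show "f x \<in> T \<longleftrightarrow> x \<in> T"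
            using Tg[of x] gx[of x] naT False by (auto split: if_splits)
        qed
        hence "T \<inter> C = {}" "T \<inter> D = {}"
          using cycle_sub_eq[OF C(1) closed_Int[OF _ Cc], of T]
                cycle_sub_eq[OF D(1) closed_Int[OF _ Dc], of T] naT False a b by auto
        thus ?thesis using T by auto
      qed
    qed
  qed
    have Ufin: "infinite ?U" using D by simp
  have cl_eq: "closed_set f T \<longleftrightarrow> closed_set g T" if "T \<inter> ?U = {}" for T
  proof -
    have "(f x \<in> T \<longleftrightarrow> x \<in> T) \<longleftrightarrow> (g x \<in> T \<longleftrightarrow> x \<in> T)" for x
    proof (cases "x \<in> ?U")
      case True
      hence "f x \<in> ?U" "g x \<in> ?U" using fU closedD[OF Ugc] by blast+
      thus ?thesis using that True by blast
    next
      case False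
      hence "f x \<notin> ?U" using fU by blast
      hence "g x = f x" using gx a b by auto
      thus ?thesis by simp
    qed
    thus ?thesis unfolding closed_set_def by blast
  qed
  have cyc_eq: "is_cycle f S \<longleftrightarrow> is_cycle g S" if "S \<inter> ?U = {}" for S
  proof -
    have "\<And>T. T \<subseteq> S \<Longrightarrow> closed_set f T \<longleftrightarrow> closed_set g T"
      using cl_eq that by blast
    thus ?thesis unfolding is_cycle_def using cl_eq[OF that] by blast
  qed
  show ?thesis
  proof (intro set_eqI iffI)
    fix S assume S: "S \<in> {S. is_cycle g S \<and> finite S \<and> card S = m}"
    have "S \<subseteq> ?U \<or> S \<inter> ?U = {}" using cycle_sub_or_disj[OF _ Ugc] S by blast
    moreover have "\<not> S \<subseteq> ?U"
    proof
      assume "S \<subseteq> ?U"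
      hence "S = ?U" using key S cycle_closed cycle_ne by blast
      thus False using S Ufin by simp
    qed
    ultimately have dj: "S \<inter> ?U = {}" by blast
    hence "S \<noteq> C" using a by blast
    thus "S \<in> {S. is_cycle f S \<and> finite S \<and> card S = m} - {C}"
      using S cyc_eq[OF dj] by simp
  next
    fix S assume S: "S \<in> {S. is_cycle f S \<and> finite S \<and> card S = m} - {C}"
    have "S \<inter> ?U = {}"
    proof (rule ccontr)
      assume ne: "S \<inter> ?U \<noteq> {}"
      have "S \<subseteq> ?U" using cycle_sub_or_disj[OF _ Uc] S ne by blast
      show False
      proof (cases "S \<inter> C = {}")
        case True
        hence "S \<subseteq> D" using \<open>S \<subseteq> ?U\<close> by blast
        hence "S = D" using cycle_sub_eq[OF D(1)] S cycle_closed cycle_ne by blast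
        thus False using S D by simp
      next
        case False
        hence "S \<subseteq> C" using cycle_sub_or_disj[OF _ Cc] S by blast
        hence "S = C" using cycle_sub_eq[OF C(1)] S cycle_closed cycle_ne by blast
        thus False using S by simp
      qed
    qed
    thus "S \<in> {S. is_cycle g S \<and> finite S \<and> card S = m}" using S cyc_eq by blast
  qed
qed


theorem mainTheorem10:
  fixes f :: "'a \<Rightarrow> 'a" and n :: nat
  assumes "countable (UNIV :: 'a set)" and "infinite (UNIV :: 'a set)"
    and "inj f"
    and "\<exists>S. is_cycle f S \<and> infinite S"
    and "n > 0" and "cyc_count f n > 0"
  shows "\<exists>a b. a \<noteq> b \<and>
           cyc_count (transpose a b \<circ> f) n = cyc_count f n - 1 \<and>
           (\<forall>m. m > 0 \<and> m \<noteq> n \<longrightarrow> cyc_count (transpose a b \<circ> f) m = cyc_count f m)"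
proof -
  obtain D where D: "is_cycle f D" "infinite D" using assms(4) by blast
  have "{S. is_cycle f S \<and> finite S \<and> card S = n} \<noteq> {}"
  proof
    assume e: "{S. is_cycle f S \<and> finite S \<and> card S = n} = {}"
    have "cyc_count f n = 0" unfolding cyc_count_def Let_def e by (simp add: zero_enat_def)
    thus False using assms(6) by simp
  qed
  then obtain C where C: "is_cycle f C" "finite C" "card C = n" by blast
  obtain a where a: "a \<in> C" using cycle_ne[OF C(1)] by blast
  obtain b where b: "b \<in> D" using cycle_ne[OF D(1)] by blast
  have ab: "a \<noteq> b"
  proof
    assume "a = b"
    hence "C \<inter> D \<noteq> {}" using a b by blast
    have Cc: "closed_set f C" "closed_set f D" using C(1) D(1) cycle_closed by blast+
    have "C \<inter> D = C" using cycle_sub_eq[OF C(1) closed_Int[OF Cc]] \<open>C \<inter> D \<noteq> {}\<close> by auto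
    hence "C \<subseteq> D" by blast
    hence "C = D" using cycle_sub_eq[OF D(1) Cc(1)] cycle_ne[OF C(1)] by blast
    thus False using C D by simp
  qed
  have E: "\<And>m. {S. is_cycle (transpose a b \<circ> f) S \<and> finite S \<and> card S = m} =
         {S. is_cycle f S \<and> finite S \<and> card S = m} - {C}"
    using main_aux[OF assms(3) C(1,2) D a b refl] by blast
  have "cyc_count (transpose a b \<circ> f) n = cyc_count f n - 1"
  proof -
    let ?P = "{S. is_cycle f S \<and> finite S \<and> card S = n}"
    have Cin: "C \<in> ?P" using C by simp
    show ?thesis
    proof (cases "finite ?P")
      case True
      have "card (?P - {C}) = card ?P - 1" using Cin True by simp
      moreover have "card ?P \<ge> 1" using Cin True by (metis One_nat_def Suc_leI card_gt_0_iff empty_iff)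
      ultimately show ?thesis unfolding cyc_count_def Let_def E using True
        by (simp add: one_enat_def)
    next
      case False
      thus ?thesis unfolding cyc_count_def Let_def E by simp
    qed
  qed
  moreover have "\<forall>m. m > 0 \<and> m \<noteq> n \<longrightarrow> cyc_count (transpose a b \<circ> f) m = cyc_count f m"
  proof (intro allI impI)
    fix m assume "0 < m \<and> m \<noteq> n"
    hence "{S. is_cycle f S \<and> finite S \<and> card S = m} - {C} = {S. is_cycle f S \<and> finite S \<and> card S = m}"
      using C by auto
    thus "cyc_count (transpose a b \<circ> f) m = cyc_count f m" unfolding cyc_count_def E by simp
  qed
  ultimately show ?thesis using ab by blast
qed

end
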